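(* Let $\delta>0$ and $0<\alpha<2$. Suppose there is a constant $C_2>0$ such that $$\mu_V\big((f-\mu_V(f))^2\big)\le C_2 D_{\alpha,V,\delta}(f,f)\quad\text{for all } f\in C_b^\infty(\mathbb R^d).$$ Then there is a constant $\lambda_0>0$ such that $\int e^{\lambda_0|x|}\,\mu_V(dx)<\infty$.
   Context: Let $d\ge1$. $V:\mathbb R^d\to\mathbb R$ is a locally bounded measurable function such that $e^{-V}$ is bounded and $\int e^{-V(x)}dx<\infty$; $\mu_V(dx)=\frac{e^{-V(x)}}{\int e^{-V(y)}dy}dx$, and $\mu_V(f)=\int f\,d\mu_V$. $C_b^\infty(\mathbb R^d)$ is the set of smooth functions on $\mathbb R^d$ that are bounded together with all their derivatives. For $\alpha\in(0,2)$, $\delta\ge0$, $$D_{\alpha,V,\delta}(f,f):=\iint\frac{(f(y)-f(x))^2}{|y-x|^{d+\alpha}}e^{-\delta|y-x|}\,dy\,\mu_V(dx).$$ *)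

theory Defs
  imports "HOL-Analysis.Analysis"
begin

text \<open>R^d is modelled by an arbitrary Euclidean space 'a with d = DIM('a) (so d \<ge> 1).\<close>

definition partial_deriv :: "'a::euclidean_space \<Rightarrow> ('a \<Rightarrow> real) \<Rightarrow> 'a \<Rightarrow> real" where
  "partial_deriv i f x = frechet_derivative f (at x) i"

fun iter_partial :: "'a::euclidean_space list \<Rightarrow> ('a \<Rightarrow> real) \<Rightarrow> 'a \<Rightarrow> real" where
  "iter_partial [] f = f"
| "iter_partial (i # is) f = partial_deriv i (iter_partial is f)"

definition Cb_inf :: "('a::euclidean_space \<Rightarrow> real) \<Rightarrow> bool" where
  "Cb_inf f \<longleftrightarrow> (\<forall>is. set is \<subseteq> Basis \<longrightarrow>
      (\<forall>x. iter_partial is f differentiable (at x)) \<and> bounded (range (iter_partial is f)))"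

definition locally_bounded :: "('a::euclidean_space \<Rightarrow> real) \<Rightarrow> bool" where
  "locally_bounded V \<longleftrightarrow> (\<forall>x. \<exists>e>0. bounded (V ` ball x e))"

definition muV :: "('a::euclidean_space \<Rightarrow> real) \<Rightarrow> 'a measure" where
  "muV V = density lebesgue
     (\<lambda>x. ennreal (exp (- V x) / (\<integral>y. exp (- V y) \<partial>lebesgue)))"

definition Dform :: "real \<Rightarrow> ('a::euclidean_space \<Rightarrow> real) \<Rightarrow> real \<Rightarrow> ('a \<Rightarrow> real) \<Rightarrow> ennreal" where
  "Dform \<alpha> V \<delta> f = (\<integral>\<^sup>+ x. (\<integral>\<^sup>+ y. ennreal ((f y - f x)^2 / norm (y - x) powr (real DIM('a) + \<alpha>)
        * exp (- \<delta> * norm (y - x))) \<partial>lebesgue) \<partial>muV V)"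

end

theory Submission
  imports Defs "HOL-Probability.Probability_Measure" "HOL-Real_Asymp.Real_Asymp"
begin


coinductive T :: "(real \<Rightarrow> real) \<Rightarrow> bool" where
  "(\<And>t. \<bar>g t\<bar> \<le> B) \<Longrightarrow> (\<And>t. (g has_real_derivative g' t) (at t)) \<Longrightarrow> T g' \<Longrightarrow> T g"

lemma T_D: assumes "T g" obtains B g' where "\<And>t. \<bar>g t\<bar> \<le> B" "\<And>t. (g has_real_derivative g' t) (at t)" "T g'"
  using assms by (cases rule: T.cases) blast

lemma T_const: "T (\<lambda>_. c)"
proof (rule T.coinduct[where X="\<lambda>g. \<exists>c. g = (\<lambda>_. c)"])
  fix g assume "\<exists>c. g = (\<lambda>_::real. c::real)"
  then obtain c where g: "g = (\<lambda>_. c)" by blast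
  show "\<exists>ga B g'. g = ga \<and> (\<forall>x. \<bar>ga x\<bar> \<le> B) \<and> (\<forall>x. (ga has_real_derivative g' x) (at x)) \<and> ((\<lambda>g. \<exists>c. g = (\<lambda>_. c)) g' \<or> T g')"
    by (rule exI[of _ g], rule exI[of _ "\<bar>c\<bar>"], rule exI[of _ "\<lambda>_. 0"])
       (auto simp: g)
qed auto

definition SP :: "((real \<Rightarrow> real) \<times> (real \<Rightarrow> real)) list \<Rightarrow> real \<Rightarrow> real" where
  "SP ps t = sum_list (map (\<lambda>(p,q). p t * q t) ps)"

lemma SP_step:
  assumes "\<forall>(p,q)\<in>set ps. T p \<and> T q"
  shows "\<exists>B ps'. (\<forall>(p,q)\<in>set ps'. T p \<and> T q) \<and> (\<forall>t. \<bar>SP ps t\<bar> \<le> B)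
           \<and> (\<forall>t. (SP ps has_real_derivative SP ps' t) (at t))"
  using assms
proof (induction ps)
  case Nil
  show ?case by (rule exI[of _ 0], rule exI[of _ "[]"]) (auto simp: SP_def)
next
  case (Cons pq ps)
  obtain p q where pq: "pq = (p,q)" by force
  from Cons.prems pq have Tp: "T p" and Tq: "T q" by auto
  from Cons.IH Cons.prems obtain B ps' where IH: "\<forall>(p,q)\<in>set ps'. T p \<and> T q" "\<forall>t. \<bar>SP ps t\<bar> \<le> B"
           "\<forall>t. (SP ps has_real_derivative SP ps' t) (at t)" by auto
  obtain Bp p' where p: "\<And>t. \<bar>p t\<bar> \<le> Bp" "\<And>t. (p has_real_derivative p' t) (at t)" "T p'"
    using T_D[OF Tp] by blast
  obtain Bq q' where q: "\<And>t. \<bar>q t\<bar> \<le> Bq" "\<And>t. (q has_real_derivative q' t) (at t)" "T q'"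
    using T_D[OF Tq] by blast
  have SPc: "SP (pq#ps) = (\<lambda>t. p t * q t + SP ps t)" for ps by (auto simp: SP_def pq)
  have SPc2: "SP ((p',q)#(p,q')#ps') = (\<lambda>t. p' t * q t + p t * q' t + SP ps' t)"
    by (auto simp: SP_def)
  show ?case
  proof (rule exI[of _ "Bp*Bq + B"], rule exI[of _ "(p',q)#(p,q')#ps'"], intro conjI allI)
    show "\<forall>(p,q)\<in>set ((p',q)#(p,q')#ps'). T p \<and> T q" using IH p q Tp Tq by auto
  next
    fix t
    have "\<bar>p t\<bar> * \<bar>q t\<bar> \<le> Bp * Bq"
      by (rule mult_mono[OF p(1) q(1)]) (auto intro: order_trans[OF abs_ge_zero p(1)])
    then have "\<bar>p t * q t\<bar> \<le> Bp * Bq" by (simp add: abs_mult)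
    moreover have "\<bar>p t * q t + SP ps t\<bar> \<le> \<bar>p t * q t\<bar> + \<bar>SP ps t\<bar>" by (rule abs_triangle_ineq)
    ultimately show "\<bar>SP (pq # ps) t\<bar> \<le> Bp * Bq + B" using IH(2) unfolding SPc
      by (meson add_mono order_trans)
  next
    fix t
    show "(SP (pq # ps) has_real_derivative SP ((p', q) # (p, q') # ps') t) (at t)"
    proof -
      have 1: "((\<lambda>t. p t * q t) has_real_derivative p' t * q t + p t * q' t) (at t)"
        using DERIV_mult[OF p(2) q(2)] by (simp add: mult.commute)
      show ?thesis unfolding SPc SPc2 using DERIV_add[OF 1 IH(3)[rule_format, of t]] by simp
    qed
  qed
qed

lemma T_SP: assumes "\<forall>(p,q)\<in>set ps. T p \<and> T q" shows "T (SP ps)"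
proof (rule T.coinduct[where X="\<lambda>g. \<exists>ps. (\<forall>(p,q)\<in>set ps. T p \<and> T q) \<and> g = SP ps"])
  show "\<exists>psa. (\<forall>(p,q)\<in>set psa. T p \<and> T q) \<and> SP ps = SP psa" using assms by blast
next
  fix g assume "\<exists>ps. (\<forall>(p,q)\<in>set ps. T p \<and> T q) \<and> g = SP ps"
  then obtain ps where ps: "\<forall>(p,q)\<in>set ps. T p \<and> T q" "g = SP ps" by blast
  from SP_step[OF ps(1)] obtain B ps' where "\<forall>(p,q)\<in>set ps'. T p \<and> T q" "\<forall>t. \<bar>SP ps t\<bar> \<le> B"
         "\<forall>t. (SP ps has_real_derivative SP ps' t) (at t)" by blast
  then show "\<exists>ga B g'. g = ga \<and> (\<forall>x. \<bar>ga x\<bar> \<le> B) \<and> (\<forall>x. (ga has_real_derivative g' x) (at x)) \<and>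
     ((\<lambda>g. \<exists>ps. (\<forall>(p,q)\<in>set ps. T p \<and> T q) \<and> g = SP ps) g' \<or> T g')" using ps(2) by blast
qed

lemma T_mult: "T f \<Longrightarrow> T g \<Longrightarrow> T (\<lambda>t. f t * g t)"
proof -
  have "SP [(f,g)] = (\<lambda>t. f t * g t)" by (simp add: SP_def fun_eq_iff)
  then show "T f \<Longrightarrow> T g \<Longrightarrow> T (\<lambda>t. f t * g t)" using T_SP[of "[(f,g)]"] by simp
qed

lemma T_add: "T f \<Longrightarrow> T g \<Longrightarrow> T (\<lambda>t. f t + g t)"
proof -
  have "SP [(f,\<lambda>_. 1),(g,\<lambda>_. 1)] = (\<lambda>t. f t + g t)" by (simp add: SP_def fun_eq_iff)
  then show "T f \<Longrightarrow> T g \<Longrightarrow> T (\<lambda>t. f t + g t)" using T_SP[of "[(f,\<lambda>_. 1),(g,\<lambda>_. 1)]"] T_const[of 1] by simp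
qed

lemma T_sin: "T (\<lambda>t. a * sin (b * t + c))"
proof (rule T.coinduct[where X="\<lambda>g. \<exists>a c. g = (\<lambda>t. a * sin (b * t + c))"])
  fix g assume "\<exists>a c. g = (\<lambda>t. a * sin (b * t + c))"
  then obtain a c where g: "g = (\<lambda>t. a * sin (b * t + c))" by blast
  have D1: "(g has_real_derivative (a*b) * sin (b * t + (c + pi/2))) (at t)" for t
  proof -
    have "sin (b * t + (c + pi/2)) = cos (b*t + c)"
    proof -
      have "b * t + (c + pi/2) = (b*t+c) + pi/2" by simp
      then show ?thesis by (simp only: sin_add) simp
    qed
    moreover have "((\<lambda>t. a * sin (b*t+c)) has_real_derivative a * (cos (b*t+c) * b)) (at t)"
      by (auto intro!: derivative_eq_intros)
    ultimately show ?thesis unfolding g by (simp add: mult_ac)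
  qed
  have B1: "\<bar>g t\<bar> \<le> \<bar>a\<bar>" for t unfolding g
    by (simp add: abs_mult mult_left_le)
  show "\<exists>ga B g'. g = ga \<and> (\<forall>x. \<bar>ga x\<bar> \<le> B) \<and> (\<forall>x. (ga has_real_derivative g' x) (at x)) \<and>
     ((\<lambda>g. \<exists>a c. g = (\<lambda>t. a * sin (b * t + c))) g' \<or> T g')"
    apply (rule exI[of _ g], rule exI[of _ "\<bar>a\<bar>"], rule exI[of _ "\<lambda>t. (a*b) * sin (b * t + (c + pi/2))"])
    apply (intro conjI allI refl disjI1)
      apply (rule B1)
     apply (rule D1)
    apply (rule exI[of _ "a*b"], rule exI[of _ "c + pi/2"], rule refl)
    done
qed auto

lemma T_exp: assumes "T h" shows "T (\<lambda>t. exp (h t))"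
proof (rule T.coinduct[where X="\<lambda>g. \<exists>p. T p \<and> g = (\<lambda>t. p t * exp (h t))"])
  show "\<exists>p. T p \<and> (\<lambda>t. exp (h t)) = (\<lambda>t. p t * exp (h t))" using T_const[of 1] by auto
next
  fix g assume "\<exists>p. T p \<and> g = (\<lambda>t. p t * exp (h t))"
  then obtain p where p: "T p" "g = (\<lambda>t. p t * exp (h t))" by blast
  obtain Bp p' where p': "\<And>t. \<bar>p t\<bar> \<le> Bp" "\<And>t. (p has_real_derivative p' t) (at t)" "T p'"
    using T_D[OF p(1)] by blast
  obtain Bh h' where h': "\<And>t. \<bar>h t\<bar> \<le> Bh" "\<And>t. (h has_real_derivative h' t) (at t)" "T h'"
    using T_D[OF assms] by blast
  have T1: "T (\<lambda>t. p' t + p t * h' t)" by (intro T_add T_mult p' h' p)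
  have D1: "(g has_real_derivative (p' t + p t * h' t) * exp (h t)) (at t)" for t
  proof -
    have 1: "((\<lambda>t. exp (h t)) has_real_derivative exp (h t) * h' t) (at t)"
      using DERIV_chain2[OF DERIV_exp h'(2)] by simp
    show ?thesis unfolding p(2) using DERIV_mult[OF p'(2) 1] by (simp add: algebra_simps)
  qed
  have B1: "\<bar>g t\<bar> \<le> Bp * exp Bh" for t
  proof -
    have "\<bar>p t\<bar> * exp (h t) \<le> Bp * exp Bh"
    proof (rule mult_mono)
      show "\<bar>p t\<bar> \<le> Bp" by (rule p'(1))
      show "exp (h t) \<le> exp Bh" using h'(1)[of t] by simp
      show "0 \<le> Bp" using order_trans[OF abs_ge_zero p'(1)] .
    qed simp
    then show ?thesis by (simp add: p(2) abs_mult)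
  qed
  show "\<exists>ga B g'. g = ga \<and> (\<forall>x. \<bar>ga x\<bar> \<le> B) \<and> (\<forall>x. (ga has_real_derivative g' x) (at x)) \<and>
     ((\<lambda>g. \<exists>p. T p \<and> g = (\<lambda>t. p t * exp (h t))) g' \<or> T g')"
    apply (rule exI[of _ g], rule exI[of _ "Bp * exp Bh"], rule exI[of _ "\<lambda>t. (p' t + p t * h' t) * exp (h t)"])
    apply (intro conjI allI refl disjI1)
      apply (rule B1)
     apply (rule D1)
    apply (rule exI[of _ "\<lambda>t. p' t + p t * h' t"], intro conjI refl T1)
    done
qed

lemma iter_partial_T:
  assumes "T g"
  shows "\<exists>c h. T h \<and> iter_partial is (\<lambda>x::'a::euclidean_space. g (x \<bullet> e)) = (\<lambda>x. c * h (x \<bullet> e))"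
proof (induction "is")
  case Nil
  show ?case using assms by (intro exI[of _ 1] exI[of _ g]) auto
next
  case (Cons i "is")
  then obtain c h where h: "T h" "iter_partial is (\<lambda>x::'a. g (x \<bullet> e)) = (\<lambda>x. c * h (x \<bullet> e))" by blast
  obtain B h' where h': "\<And>t. \<bar>h t\<bar> \<le> B" "\<And>t. (h has_real_derivative h' t) (at t)" "T h'"
    using T_D[OF h(1)] by blast
  have D: "((\<lambda>x::'a. c * h (x \<bullet> e)) has_derivative (\<lambda>v. c * (h' (x \<bullet> e) * (v \<bullet> e)))) (at x)" for x
  proof -
    have 1: "(h has_derivative (\<lambda>u. h' (x \<bullet> e) * u)) (at (x \<bullet> e))"
      using h'(2) by (simp add: has_field_derivative_def)
    have 2: "((\<lambda>x::'a. x \<bullet> e) has_derivative (\<lambda>v. v \<bullet> e)) (at x)"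
      using has_derivative_inner_left[OF has_derivative_ident] .
    have "((\<lambda>x::'a. h (x \<bullet> e)) has_derivative (\<lambda>v. h' (x \<bullet> e) * (v \<bullet> e))) (at x)"
      using diff_chain_at[OF 2 1] by (simp add: o_def)
    then show ?thesis by (rule has_derivative_mult_right)
  qed
  have "iter_partial (i#is) (\<lambda>x::'a. g (x \<bullet> e)) = (\<lambda>x. (c * (i \<bullet> e)) * h' (x \<bullet> e))"
  proof -
    have "partial_deriv i (\<lambda>x::'a. c * h (x \<bullet> e)) x = (c * (i \<bullet> e)) * h' (x \<bullet> e)" for x
    proof -
      have "frechet_derivative (\<lambda>x::'a. c * h (x \<bullet> e)) (at x) = (\<lambda>v. c * (h' (x \<bullet> e) * (v \<bullet> e)))"
        using frechet_derivative_at[OF D[of x]] by simp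
      then show ?thesis by (simp add: partial_deriv_def)
    qed
    then show ?thesis by (simp add: h(2) fun_eq_iff)
  qed
  then show ?case using h'(3) by blast
qed

lemma Cb_inf_T:
  assumes "T g" shows "Cb_inf (\<lambda>x::'a::euclidean_space. g (x \<bullet> e))"
  unfolding Cb_inf_def
proof (intro allI impI conjI)
  fix "is" :: "'a list"
  obtain c h where h: "T h" "iter_partial is (\<lambda>x::'a. g (x \<bullet> e)) = (\<lambda>x. c * h (x \<bullet> e))"
    using iter_partial_T[OF assms] by blast
  obtain B h' where h': "\<And>t. \<bar>h t\<bar> \<le> B" "\<And>t. (h has_real_derivative h' t) (at t)" "T h'"
    using T_D[OF h(1)] by blast
  fix x :: 'a
  have 1: "(h has_derivative (\<lambda>u. h' (x \<bullet> e) * u)) (at (x \<bullet> e))"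
    using h'(2) by (simp add: has_field_derivative_def)
  have 2: "((\<lambda>x::'a. x \<bullet> e) has_derivative (\<lambda>v. v \<bullet> e)) (at x)"
    using has_derivative_inner_left[OF has_derivative_ident] .
  have "((\<lambda>x::'a. h (x \<bullet> e)) has_derivative (\<lambda>v. h' (x \<bullet> e) * (v \<bullet> e))) (at x)"
    using diff_chain_at[OF 2 1] by (simp add: o_def)
  then have "((\<lambda>x::'a. c * h (x \<bullet> e)) has_derivative (\<lambda>v. c * (h' (x \<bullet> e) * (v \<bullet> e)))) (at x)"
    by (rule has_derivative_mult_right)
  then show "iter_partial is (\<lambda>x. g (x \<bullet> e)) differentiable at x"
    unfolding h(2) differentiable_def by blast
next
  fix "is" :: "'a list"
  obtain c h where h: "T h" "iter_partial is (\<lambda>x::'a. g (x \<bullet> e)) = (\<lambda>x. c * h (x \<bullet> e))"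
    using iter_partial_T[OF assms] by blast
  obtain B h' where h': "\<And>t. \<bar>h t\<bar> \<le> B" "\<And>t. (h has_real_derivative h' t) (at t)" "T h'"
    using T_D[OF h(1)] by blast
  have "norm (c * h (x \<bullet> e)) \<le> \<bar>c\<bar> * B" for x :: 'a
    by (simp add: abs_mult mult_left_mono h'(1))
  then show "bounded (range (iter_partial is (\<lambda>x. g (x \<bullet> e))))"
    unfolding h(2) bounded_iff by blast
qed



lemma dyadic_int:
  fixes r :: real assumes "r > 0"
  shows "2 powr (real_of_int (\<lceil>log 2 r\<rceil> - 1)) < r \<and> r \<le> 2 powr (real_of_int (\<lceil>log 2 r\<rceil> - 1) + 1)"
proof -
  define j where "j = \<lceil>log 2 r\<rceil> - 1"
  have j1: "real_of_int j < log 2 r" "log 2 r \<le> real_of_int j + 1"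
    unfolding j_def by linarith+
  have "2 powr (real_of_int j) < 2 powr (log 2 r)" using j1 by simp
  moreover have "2 powr (log 2 r) \<le> 2 powr (real_of_int j + 1)" using j1 by simp
  ultimately show ?thesis using assms by (simp add: j_def)
qed

lemma dyadic_small:
  fixes r :: real assumes "0 < r" "r \<le> 1"
  obtains k :: nat where "2 powr (- (real k + 1)) < r" "r \<le> 2 powr (- real k)"
proof -
  define j where "j = \<lceil>log 2 r\<rceil> - 1"
  have "log 2 r \<le> 0" using assms by simp
  then have "j + 1 \<le> 0" unfolding j_def by linarith
  then have e: "real_of_int j = - (real (nat (-(j+1))) + 1)" "real_of_int j + 1 = - real (nat (-(j+1)))"
    by simp_all
  show ?thesis using dyadic_int[OF assms(1)] that[of "nat (-(j+1))"] unfolding j_def[symmetric] e by simp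
qed

lemma dyadic_large:
  fixes r :: real assumes "1 < r"
  obtains m :: nat where "2 powr (real m) < r" "r \<le> 2 powr (real m + 1)"
proof -
  define j where "j = \<lceil>log 2 r\<rceil> - 1"
  have "log 2 r > 0" using assms by simp
  then have "j \<ge> 0" unfolding j_def by linarith
  then have e: "real_of_int j = real (nat j)"
    by simp_all
  show ?thesis using dyadic_int[of r] assms that[of "nat j"] unfolding j_def[symmetric] e by simp
qed

lemma geo_aux: "2 powr ((real k + 1) * a) * (U * 2 powr (- real k * d)) = U * 2 powr a * (2 powr (a - d)) ^ k"
proof -
  have 1: "(2 powr (a - d)) ^ k = 2 powr (real k * (a - d))"
    by (simp add: powr_power)
  have "2 powr ((real k + 1) * a) * (U * 2 powr (- real k * d)) = U * (2 powr ((real k + 1) * a) * 2 powr (- real k * d))"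
    by (simp add: mult_ac)
  also have "\<dots> = U * 2 powr ((real k + 1) * a + (- real k * d))"
    by (simp only: powr_add)
  also have "(real k + 1) * a + (- real k * d) = a + real k * (a - d)" by (simp add: algebra_simps)
  also have "U * 2 powr (a + real k * (a - d)) = U * 2 powr a * (2 powr (a - d)) ^ k"
    by (simp add: 1 powr_add)
  finally show ?thesis .
qed
lemma geo_aux2: "2 powr (- real k * a) * (U * 2 powr ((real k + 1) * d)) = U * 2 powr d * (2 powr (d - a)) ^ k"
  using geo_aux[of k d U a] by (simp add: mult_ac)

lemma emeasure_cball_powr:
  "emeasure lborel (cball (0::'a::euclidean_space) (2 powr t)) = ennreal (unit_ball_vol (real DIM('a)) * 2 powr (t * DIM('a)))"
  by (simp add: emeasure_cball powr_realpow[symmetric] powr_powr)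

lemma near_finite:
  fixes a :: real
  assumes a: "0 \<le> a" "a < real DIM('a::euclidean_space)"
  shows "(\<integral>\<^sup>+ z. ennreal (indicator {z::'a. norm z \<le> 1} z * norm z powr (-a)) \<partial>lborel) < \<infinity>"
proof -
  define U where "U = unit_ball_vol (real DIM('a))"
  have U: "U \<ge> 0" unfolding U_def by simp
  define f where "f k z = ennreal (2 powr ((real k + 1) * a)) * indicator (cball (0::'a) (2 powr (- real k))) z" for k z
  have pw: "ennreal (indicator {z::'a. norm z \<le> 1} z * norm z powr (-a)) \<le> (\<Sum>k. f k z)" for z
  proof (cases "z \<noteq> 0 \<and> norm z \<le> 1")
    case True
    then have nz: "0 < norm z" "norm z \<le> 1" by auto
    obtain k where k: "2 powr (- (real k + 1)) < norm z" "norm z \<le> 2 powr (- real k)"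
      using dyadic_small[OF nz] by blast
    have "norm z powr (-a) \<le> (2 powr (- (real k + 1))) powr (-a)"
      using k(1) a by (intro powr_mono2') auto
    also have "\<dots> = 2 powr ((real k + 1) * a)" by (simp add: powr_powr algebra_simps)
    finally have "ennreal (indicator {z::'a. norm z \<le> 1} z * norm z powr (-a)) \<le> f k z"
      using nz k(2) by (simp add: f_def indicator_def)
    also have "f k z \<le> (\<Sum>k. f k z)"
      using sum_le_suminf[of "\<lambda>k. f k z" "{k}"] by simp
    finally show ?thesis .
  next
    case False
    then show ?thesis by (auto simp: indicator_def)
  qed
  have "(\<integral>\<^sup>+ z. ennreal (indicator {z::'a. norm z \<le> 1} z * norm z powr (-a)) \<partial>lborel)
      \<le> (\<integral>\<^sup>+ z. (\<Sum>k. f k z) \<partial>lborel)"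
    by (intro nn_integral_mono pw)
  also have "\<dots> = (\<Sum>k. \<integral>\<^sup>+ z. f k z \<partial>lborel)"
  proof (intro nn_integral_suminf)
    fix k
    have "cball (0::'a) (2 powr r) \<in> sets lborel" for r by simp
    then show "f k \<in> borel_measurable lborel" unfolding f_def by measurable
  qed
  also have "\<dots> = (\<Sum>k. ennreal (U * 2 powr a * (2 powr (a - real DIM('a))) ^ k))"
  proof (intro suminf_cong)
    fix k
    have "(\<integral>\<^sup>+ z. f k z \<partial>lborel) = ennreal (2 powr ((real k + 1) * a)) * ennreal (U * 2 powr (- real k * DIM('a)))"
    proof -
      have "cball (0::'a) r \<in> sets lborel" for r by simp
      then show ?thesis unfolding f_def by (simp only: nn_integral_cmult_indicator emeasure_cball_powr U_def)
    qed
    also have "\<dots> = ennreal (2 powr ((real k + 1) * a) * (U * 2 powr (- real k * DIM('a))))"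
      using U by (simp add: ennreal_mult)
    also have "2 powr ((real k + 1) * a) * (U * 2 powr (- real k * DIM('a))) = U * 2 powr a * (2 powr (a - real DIM('a))) ^ k"
      by (rule geo_aux)
    finally show "(\<integral>\<^sup>+ z. f k z \<partial>lborel) = ennreal (U * 2 powr a * (2 powr (a - real DIM('a))) ^ k)" .
  qed
  also have "\<dots> = ennreal (\<Sum>k. U * 2 powr a * (2 powr (a - real DIM('a))) ^ k)"
  proof (intro suminf_ennreal2)
    show "summable (\<lambda>k. U * 2 powr a * (2 powr (a - real DIM('a))) ^ k)"
      using a by (intro summable_mult summable_geometric) (simp add: powr_less_one)
  qed (use U in simp)
  also have "\<dots> < \<infinity>" by simp
  finally show ?thesis .
qed

lemma far_finite:
  fixes a :: real
  assumes a: "real DIM('a::euclidean_space) < a"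
  shows "(\<integral>\<^sup>+ z. ennreal (indicator {z::'a. 1 < norm z} z * norm z powr (-a)) \<partial>lborel) < \<infinity>"
proof -
  define U where "U = unit_ball_vol (real DIM('a))"
  have U: "U \<ge> 0" unfolding U_def by simp
  have a0: "a > 0" using a by (smt (verit) of_nat_0_le_iff)
  define f where "f k z = ennreal (2 powr (- real k * a)) * indicator (cball (0::'a) (2 powr (real k + 1))) z" for k z
  have pw: "ennreal (indicator {z::'a. 1 < norm z} z * norm z powr (-a)) \<le> (\<Sum>k. f k z)" for z
  proof (cases "1 < norm z")
    case True
    obtain k where k: "2 powr (real k) < norm z" "norm z \<le> 2 powr (real k + 1)"
      using dyadic_large[OF True] by blast
    have "norm z powr (-a) \<le> (2 powr (real k)) powr (-a)"
      using k(1) a0 by (intro powr_mono2') auto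
    also have "\<dots> = 2 powr (- real k * a)" by (simp add: powr_powr)
    finally have "ennreal (indicator {z::'a. 1 < norm z} z * norm z powr (-a)) \<le> f k z"
      using True k(2) by (simp add: f_def indicator_def)
    also have "f k z \<le> (\<Sum>k. f k z)"
      using sum_le_suminf[of "\<lambda>k. f k z" "{k}"] by simp
    finally show ?thesis .
  next
    case False
    then show ?thesis by (auto simp: indicator_def)
  qed
  have "(\<integral>\<^sup>+ z. ennreal (indicator {z::'a. 1 < norm z} z * norm z powr (-a)) \<partial>lborel)
      \<le> (\<integral>\<^sup>+ z. (\<Sum>k. f k z) \<partial>lborel)"
    by (intro nn_integral_mono pw)
  also have "\<dots> = (\<Sum>k. \<integral>\<^sup>+ z. f k z \<partial>lborel)"
  proof (intro nn_integral_suminf)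
    fix k
    have "cball (0::'a) (2 powr r) \<in> sets lborel" for r by simp
    then show "f k \<in> borel_measurable lborel" unfolding f_def by measurable
  qed
  also have "\<dots> = (\<Sum>k. ennreal (U * 2 powr DIM('a) * (2 powr (real DIM('a) - a)) ^ k))"
  proof (intro suminf_cong)
    fix k
    have "(\<integral>\<^sup>+ z. f k z \<partial>lborel) = ennreal (2 powr (- real k * a)) * ennreal (U * 2 powr ((real k + 1) * DIM('a)))"
    proof -
      have "cball (0::'a) r \<in> sets lborel" for r by simp
      then show ?thesis unfolding f_def by (simp only: nn_integral_cmult_indicator emeasure_cball_powr U_def)
    qed
    also have "\<dots> = ennreal (2 powr (- real k * a) * (U * 2 powr ((real k + 1) * DIM('a))))"
      using U by (simp add: ennreal_mult)
    also have "2 powr (- real k * a) * (U * 2 powr ((real k + 1) * DIM('a))) = U * 2 powr DIM('a) * (2 powr (real DIM('a) - a)) ^ k"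
      by (rule geo_aux2)
    finally show "(\<integral>\<^sup>+ z. f k z \<partial>lborel) = ennreal (U * 2 powr DIM('a) * (2 powr (real DIM('a) - a)) ^ k)" .
  qed
  also have "\<dots> = ennreal (\<Sum>k. U * 2 powr DIM('a) * (2 powr (real DIM('a) - a)) ^ k)"
  proof (intro suminf_ennreal2)
    show "summable (\<lambda>k. U * 2 powr DIM('a) * (2 powr (real DIM('a) - a)) ^ k)"
      using a by (intro summable_mult summable_geometric) (simp add: powr_less_one)
  qed (use U in simp)
  also have "\<dots> < \<infinity>" by simp
  finally show ?thesis .
qed



lemma cube_exp: assumes "0 \<le> (x::real)" shows "x ^ 3 \<le> 27 * exp x"
proof -
  have "x / 3 \<le> exp (x/3)" using exp_ge_add_one_self[of "x/3"] by linarith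
  then have "(x/3) ^ 3 \<le> exp (x/3) ^ 3" using assms by (intro power_mono) auto
  also have "exp (x/3) ^ 3 = exp x" by (simp add: exp_of_nat_mult[symmetric])
  finally show ?thesis by (simp add: power_divide)
qed

lemma K0_finite:
  fixes c \<alpha> :: real
  assumes c: "c > 0" and alpha: "0 < \<alpha>" "\<alpha> < 2"
  shows "(\<integral>\<^sup>+ z. ennreal (norm (z::'a::euclidean_space) powr (2 - real DIM('a) - \<alpha>) * exp (- c * norm z)) \<partial>lborel) < \<infinity>"
proof -
  define d where "d = real DIM('a)"
  have d1: "d \<ge> 1" unfolding d_def by simp
  define a1 where "a1 = d - (2 - \<alpha>) / 2"
  define C where "C = 27 / c ^ 3"
  have C: "C \<ge> 0" using c by (simp add: C_def)
  have pw: "norm z powr (2 - d - \<alpha>) * exp (- c * norm z)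
      \<le> indicator {z::'a. norm z \<le> 1} z * norm z powr (-a1) + C * (indicator {z::'a. 1 < norm z} z * norm z powr (-(d+1)))" for z :: 'a
  proof (cases "z = 0")
    case True then show ?thesis by simp
  next
    case False
    then have r: "norm z > 0" by simp
    show ?thesis
    proof (cases "norm z \<le> 1")
      case True
      have "norm z powr (2 - d - \<alpha>) \<le> norm z powr (-a1)"
        using True alpha by (intro powr_mono') (auto simp: a1_def)
      moreover have "exp (- c * norm z) \<le> 1" using c r by simp
      ultimately have "norm z powr (2 - d - \<alpha>) * exp (- c * norm z) \<le> norm z powr (-a1)"
        by (metis mult_left_le powr_ge_zero exp_ge_zero order_trans mult_right_mono mult_1_right)
      then show ?thesis using True by (simp add: indicator_def C)
    next
      case False
      then have r1: "1 < norm z" by simp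
      have e: "norm z powr (2 - d - \<alpha>) = norm z powr (3 - \<alpha>) * norm z powr (-(d+1))"
      proof -
        have "2 - d - \<alpha> = (3 - \<alpha>) + (-(d+1))" by simp
        then show ?thesis by (metis powr_add)
      qed
      have "norm z powr (3 - \<alpha>) \<le> norm z powr 3" using r1 alpha by (intro powr_mono) auto
      also have "\<dots> = norm z ^ 3" using r by (simp add: powr_realpow[of _ 3, simplified])
      finally have p3: "norm z powr (3 - \<alpha>) \<le> norm z ^ 3" .
      have "(c * norm z) ^ 3 \<le> 27 * exp (c * norm z)" using c r by (intro cube_exp) simp
      then have "norm z ^ 3 * exp (- c * norm z) \<le> C"
        using c by (simp add: C_def power_mult_distrib field_simps exp_minus)
      then have "norm z powr (3 - \<alpha>) * exp (- c * norm z) \<le> C"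
        using p3 by (meson exp_ge_zero mult_right_mono order_trans)
      then have "norm z powr (3 - \<alpha>) * exp (- c * norm z) * norm z powr (-(d+1)) \<le> C * norm z powr (-(d+1))"
        by (intro mult_right_mono) auto
      then show ?thesis using r1 by (simp add: e indicator_def mult_ac)
    qed
  qed
  have "(\<integral>\<^sup>+ z. ennreal (norm (z::'a) powr (2 - d - \<alpha>) * exp (- c * norm z)) \<partial>lborel)
     \<le> (\<integral>\<^sup>+ z. ennreal (indicator {z::'a. norm z \<le> 1} z * norm z powr (-a1))
          + ennreal C * ennreal (indicator {z::'a. 1 < norm z} z * norm z powr (-(d+1))) \<partial>lborel)"
    using pw C by (intro nn_integral_mono) (simp add: ennreal_mult[symmetric] ennreal_plus[symmetric] del: ennreal_plus)
  also have "\<dots> = (\<integral>\<^sup>+ z. ennreal (indicator {z::'a. norm z \<le> 1} z * norm z powr (-a1)) \<partial>lborel)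
       + ennreal C * (\<integral>\<^sup>+ z. ennreal (indicator {z::'a. 1 < norm z} z * norm z powr (-(d+1))) \<partial>lborel)"
    by (subst nn_integral_add) (auto simp: nn_integral_cmult)
  also have "\<dots> < \<infinity>"
  proof -
    have "(\<integral>\<^sup>+ z. ennreal (indicator {z::'a. norm z \<le> 1} z * norm z powr (-a1)) \<partial>lborel) < \<infinity>"
      using near_finite[where 'a='a and a=a1] alpha d1 unfolding d_def by (simp add: a1_def d_def)
    moreover have "(\<integral>\<^sup>+ z. ennreal (indicator {z::'a. 1 < norm z} z * norm z powr (-(d+1))) \<partial>lborel) < \<infinity>"
      using far_finite[where 'a='a and a="d+1"] by (simp add: d_def)
    ultimately show ?thesis by (simp add: ennreal_mult_less_top)
  qed
  finally show ?thesis by (simp add: d_def)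
qed



lemma exp_m1_le: fixes u :: real assumes "0 \<le> u" shows "exp u - 1 \<le> u * exp u"
proof -
  have "1 + (-u) \<le> exp (-u)" using exp_ge_add_one_self[of "-u"] .
  then have "(1 - u) * exp u \<le> exp (-u) * exp u" by (intro mult_right_mono) auto
  then show ?thesis by (simp add: exp_minus field_simps)
qed

lemma kern_bound:
  fixes lam \<delta> r d \<alpha> :: real
  assumes r: "0 \<le> r" and lam: "0 \<le> lam" "lam \<le> \<delta>/2"
  shows "(exp (lam * r / 2) - 1)^2 / r powr (d + \<alpha>) * exp (- \<delta> * r)
     \<le> (lam/2)^2 * (r powr (2 - d - \<alpha>) * exp (- (\<delta>/2) * r))"
proof (cases "r = 0")
  case True then show ?thesis by simp
next
  case False
  then have r0: "r > 0" using r by simp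
  define u where "u = lam * r / 2"
  have u: "u \<ge> 0" using lam r by (simp add: u_def)
  have "exp u - 1 \<ge> 0" using u by simp
  then have "(exp u - 1)^2 \<le> (u * exp u)^2" using exp_m1_le[OF u] by (intro power_mono) auto
  also have "\<dots> = (lam/2)^2 * r^2 * exp (lam * r)"
  proof -
    have "exp (lam * r) = exp (lam * r / 2) * exp (lam * r / 2)" by (simp add: exp_add[symmetric])
    then show ?thesis by (simp add: u_def power2_eq_square)
  qed
  finally have 1: "(exp u - 1)^2 \<le> (lam/2)^2 * r^2 * exp (lam * r)" .
  have rp: "r powr (d + \<alpha>) > 0" using r0 by simp
  have "(exp u - 1)^2 / r powr (d + \<alpha>) * exp (- \<delta> * r) \<le> (lam/2)^2 * r^2 * exp (lam * r) / r powr (d + \<alpha>) * exp (- \<delta> * r)"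
    using 1 rp by (intro mult_right_mono divide_right_mono) auto
  also have "\<dots> = (lam/2)^2 * (r^2 / r powr (d + \<alpha>)) * exp (lam * r - \<delta> * r)"
    by (simp add: exp_diff exp_minus field_simps)
  also have "r^2 / r powr (d + \<alpha>) = r powr (2 - d - \<alpha>)"
  proof -
    have "r^2 = r powr 2" using r0 by (simp add: powr_realpow[of r 2, simplified])
    then have "r^2 / r powr (d + \<alpha>) = r powr 2 / r powr (d + \<alpha>)" by simp
    also have "\<dots> = r powr (2 - (d + \<alpha>))" by (simp add: powr_diff)
    finally show ?thesis by (simp add: diff_diff_eq)
  qed
  finally have A: "(exp u - 1)^2 / r powr (d + \<alpha>) * exp (- \<delta> * r) \<le> (lam/2)^2 * r powr (2 - d - \<alpha>) * exp (lam * r - \<delta> * r)" .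
  have B: "exp (lam * r - \<delta> * r) \<le> exp (- (\<delta>/2) * r)"
  proof -
    have "(lam * 2) * r \<le> \<delta> * r" using lam r by (intro mult_right_mono) auto
    then show ?thesis by (simp add: algebra_simps)
  qed
  have "(lam/2)^2 * r powr (2 - d - \<alpha>) * exp (lam * r - \<delta> * r) \<le> (lam/2)^2 * r powr (2 - d - \<alpha>) * exp (- (\<delta>/2) * r)"
    using B by (intro mult_left_mono) auto
  with A show ?thesis unfolding u_def by (simp add: mult_ac)
qed

lemma exp_sq_bound:
  fixes w u :: real assumes "\<bar>w\<bar> \<le> u" shows "(exp w - 1)^2 \<le> (exp u - 1)^2"
proof -
  have "\<bar>exp w - 1\<bar> \<le> exp u - 1"
  proof (cases "w \<ge> 0")
    case True then show ?thesis using assms by simp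
  next
    case False
    have "1 - exp w \<le> - w" using exp_ge_add_one_self[of w] by linarith
    also have "- w \<le> exp (-w) - 1" using exp_ge_add_one_self[of "-w"] by linarith
    also have "exp (-w) - 1 \<le> exp u - 1" using assms False by simp
    finally show ?thesis using False by simp
  qed
  then have "\<bar>exp w - 1\<bar>^2 \<le> (exp u - 1)^2" by (intro power_mono) auto
  then show ?thesis by simp
qed

lemma F_bound:
  fixes p q u :: real assumes "\<bar>p - q\<bar> \<le> u"
  shows "(exp p - exp q)^2 \<le> (exp q)^2 * (exp u - 1)^2"
proof -
  have "exp p - exp q = exp q * (exp (p - q) - 1)" by (simp add: exp_diff field_simps)
  then have "(exp p - exp q)^2 = (exp q)^2 * (exp (p - q) - 1)^2" by (simp add: power_mult_distrib)
  also have "\<dots> \<le> (exp q)^2 * (exp u - 1)^2"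
    using exp_sq_bound[OF assms] by (intro mult_left_mono) auto
  finally show ?thesis .
qed

lemma sin_lip:
  fixes n s t :: real assumes "n > 0" shows "\<bar>n * sin (s/n) - n * sin (t/n)\<bar> \<le> \<bar>s - t\<bar>"
proof -
  have "\<bar>sin (s/n) - sin (t/n)\<bar> = \<bar>2 * sin ((s/n - t/n) / 2) * cos ((s/n + t/n) / 2)\<bar>"
    by (simp add: sin_diff_sin)
  also have "\<dots> \<le> 2 * \<bar>(s/n - t/n) / 2\<bar> * 1"
    unfolding abs_mult by (intro mult_mono abs_sin_x_le_abs_x) auto
  finally have "\<bar>sin (s/n) - sin (t/n)\<bar> \<le> \<bar>s - t\<bar> / n"
    using assms by (simp add: diff_divide_distrib[symmetric])
  then have "n * \<bar>sin (s/n) - sin (t/n)\<bar> \<le> \<bar>s - t\<bar>" using assms by (simp add: field_simps)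
  then show ?thesis using assms by (simp add: right_diff_distrib[symmetric] abs_mult)
qed



lemma muV_setup:
  fixes V :: "'a::euclidean_space \<Rightarrow> real"
  assumes V_meas: "V \<in> borel_measurable lebesgue"
    and V_int: "(\<integral>\<^sup>+ x. ennreal (exp (- V x)) \<partial>lebesgue) < \<infinity>"
  shows "prob_space (muV V)" and "sets (muV V) = sets lebesgue" and "space (muV V) = UNIV"
proof -
  show S: "sets (muV V) = sets lebesgue" by (simp add: muV_def)
  show "space (muV V) = UNIV" by (simp add: muV_def)
  define Z where "Z = (\<integral>y. exp (- V y) \<partial>lebesgue)"
  have meas[measurable]: "(\<lambda>x. exp (- V x)) \<in> borel_measurable lebesgue" using V_meas by measurable
  have int: "integrable lebesgue (\<lambda>x. exp (- V x))"
    using V_int by (subst integrable_iff_bounded) auto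
  have nnZ: "(\<integral>\<^sup>+ x. ennreal (exp (- V x)) \<partial>lebesgue) = ennreal Z"
    unfolding Z_def by (rule nn_integral_eq_integral[OF int]) auto
  have Z0: "Z \<ge> 0" unfolding Z_def by (intro integral_nonneg_AE) auto
  have "Z \<noteq> 0"
  proof
    assume "Z = 0"
    then have "(\<integral>\<^sup>+ x. ennreal (exp (- V x)) \<partial>lebesgue) = 0" using nnZ by simp
    then have "AE x in lebesgue. ennreal (exp (- V x)) = 0" by (subst (asm) nn_integral_0_iff_AE) auto
    then have "AE x in (lebesgue::'a measure). False" by simp
    then have "ae_filter (lebesgue::'a measure) = bot" using trivial_limit_def by blast
    then have "emeasure (lebesgue::'a measure) UNIV = 0" by (simp add: ae_filter_eq_bot_iff)
    then show False by (simp add: emeasure_completion)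
  qed
  with Z0 have Zp: "Z > 0" by simp
  have "emeasure (muV V) (space (muV V)) = (\<integral>\<^sup>+ x. ennreal (exp (- V x) / Z) \<partial>lebesgue)"
    unfolding muV_def Z_def[symmetric] by (subst emeasure_density) auto
  also have "\<dots> = (\<integral>\<^sup>+ x. ennreal (exp (- V x)) * ennreal (1/Z) \<partial>lebesgue)"
    using Zp by (simp add: ennreal_mult[symmetric])
  also have "\<dots> = ennreal Z * ennreal (1/Z)" by (subst nn_integral_multc) (auto simp: nnZ)
  also have "\<dots> = 1" using Zp by (simp add: ennreal_mult[symmetric])
  finally show "prob_space (muV V)" by (rule prob_spaceI)
qed

lemma meas_muV:
  fixes f :: "'a::euclidean_space \<Rightarrow> 'b::topological_space"
  assumes "f \<in> borel_measurable borel"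
  shows "f \<in> borel_measurable (muV V)"
proof -
  have "f \<in> borel_measurable lebesgue" using assms by (intro measurable_completion) simp
  then show ?thesis by (subst measurable_cong_sets[of _ lebesgue]) (auto simp: muV_def)
qed



lemma Dform_bound:
  fixes \<phi> :: "'a::euclidean_space \<Rightarrow> real" and lam \<delta> \<alpha> :: real
  assumes lip: "\<And>x y. \<bar>\<phi> y - \<phi> x\<bar> \<le> lam / 2 * norm (y - x)"
    and lam: "0 \<le> lam" "lam \<le> \<delta>/2"
    and \<phi>_meas[measurable]: "\<phi> \<in> borel_measurable borel"
  shows "Dform \<alpha> V \<delta> (\<lambda>x. exp (\<phi> x)) \<le> ennreal ((lam/2)^2) *
     (\<integral>\<^sup>+ z. ennreal (norm (z::'a) powr (2 - real DIM('a) - \<alpha>) * exp (- (\<delta>/2) * norm z)) \<partial>lborel)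
     * (\<integral>\<^sup>+ x. ennreal ((exp (\<phi> x))^2) \<partial>muV V)"
proof -
  define d where "d = real DIM('a)"
  define g where "g z = norm (z::'a) powr (2 - d - \<alpha>) * exp (- (\<delta>/2) * norm z)" for z
  define K where "K = (\<integral>\<^sup>+ z. ennreal (g z) \<partial>lborel)"
  define c where "c x = (exp (\<phi> x))^2 * (lam/2)^2" for x
  have g_meas[measurable]: "g \<in> borel_measurable borel" unfolding g_def by measurable
  have g0: "g z \<ge> 0" for z unfolding g_def by simp
  have c0: "c x \<ge> 0" for x unfolding c_def by simp
  have pw: "(exp (\<phi> y) - exp (\<phi> x))^2 / norm (y - x) powr (d + \<alpha>) * exp (- \<delta> * norm (y - x))
       \<le> c x * g (y - x)" for x y
  proof -
    define r where "r = norm (y - x)"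
    have r0: "r \<ge> 0" unfolding r_def by simp
    have "\<bar>\<phi> y - \<phi> x\<bar> \<le> lam * r / 2" using lip[of y x] by (simp add: r_def)
    from F_bound[OF this] have 1: "(exp (\<phi> y) - exp (\<phi> x))^2 \<le> (exp (\<phi> x))^2 * (exp (lam * r / 2) - 1)^2" .
    have "(exp (\<phi> y) - exp (\<phi> x))^2 / r powr (d + \<alpha>) * exp (- \<delta> * r)
       \<le> (exp (\<phi> x))^2 * (exp (lam * r / 2) - 1)^2 / r powr (d + \<alpha>) * exp (- \<delta> * r)"
      using 1 by (intro mult_right_mono divide_right_mono) auto
    also have "\<dots> = (exp (\<phi> x))^2 * ((exp (lam * r / 2) - 1)^2 / r powr (d + \<alpha>) * exp (- \<delta> * r))"
      by simp
    also have "\<dots> \<le> (exp (\<phi> x))^2 * ((lam/2)^2 * (r powr (2 - d - \<alpha>) * exp (- (\<delta>/2) * r)))"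
      using kern_bound[OF r0 lam, of d \<alpha>] by (intro mult_left_mono) auto
    also have "\<dots> = c x * g (y - x)" by (simp add: c_def g_def r_def)
    finally show ?thesis by (simp add: r_def)
  qed
  have transl: "(\<integral>\<^sup>+ y. ennreal (g (y - x)) \<partial>lborel) = K" for x
  proof -
    have "K = (\<integral>\<^sup>+ z. ennreal (g z) \<partial>(distr lborel borel ((+) (-x))))"
      by (simp add: lborel_distr_plus K_def)
    also have "\<dots> = (\<integral>\<^sup>+ y. ennreal (g (-x + y)) \<partial>lborel)"
      by (subst nn_integral_distr) auto
    finally show ?thesis by simp
  qed
  have inner: "(\<integral>\<^sup>+ y. ennreal ((exp (\<phi> y) - exp (\<phi> x))^2 / norm (y - x) powr (d + \<alpha>) * exp (- \<delta> * norm (y - x))) \<partial>lebesgue)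
      \<le> ennreal (c x) * K" for x
  proof -
    have "(\<integral>\<^sup>+ y. ennreal ((exp (\<phi> y) - exp (\<phi> x))^2 / norm (y - x) powr (d + \<alpha>) * exp (- \<delta> * norm (y - x))) \<partial>lebesgue)
       \<le> (\<integral>\<^sup>+ y. ennreal (c x) * ennreal (g (y - x)) \<partial>lebesgue)"
      using pw c0 g0 by (intro nn_integral_mono) (simp add: ennreal_mult[symmetric])
    also have "\<dots> = (\<integral>\<^sup>+ y. ennreal (c x) * ennreal (g (y - x)) \<partial>lborel)"
      by (rule nn_integral_completion)
    also have "\<dots> = ennreal (c x) * (\<integral>\<^sup>+ y. ennreal (g (y - x)) \<partial>lborel)"
      by (rule nn_integral_cmult) measurable
    finally show ?thesis by (simp add: transl)
  qed
  have c_meas: "(\<lambda>x. ennreal (c x)) \<in> borel_measurable (muV V)"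
    by (rule meas_muV) (unfold c_def, measurable)
  have "Dform \<alpha> V \<delta> (\<lambda>x. exp (\<phi> x)) \<le> (\<integral>\<^sup>+ x. ennreal (c x) * K \<partial>muV V)"
    unfolding Dform_def d_def[symmetric] by (intro nn_integral_mono inner)
  also have "\<dots> = (\<integral>\<^sup>+ x. ennreal (c x) \<partial>muV V) * K"
    by (rule nn_integral_multc[OF c_meas])
  also have "(\<integral>\<^sup>+ x. ennreal (c x) \<partial>muV V) = (\<integral>\<^sup>+ x. ennreal ((exp (\<phi> x))^2) * ennreal ((lam/2)^2) \<partial>muV V)"
    by (simp add: c_def ennreal_mult)
  also have "\<dots> = (\<integral>\<^sup>+ x. ennreal ((exp (\<phi> x))^2) \<partial>muV V) * ennreal ((lam/2)^2)"
    by (rule nn_integral_multc) (rule meas_muV, measurable)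
  finally show ?thesis by (simp add: K_def g_def d_def mult_ac)
qed



lemma nsin_lim: "(\<lambda>k. (real k + 1) * sin (t / (real k + 1))) \<longlonglongrightarrow> t"
proof (cases "t = 0")
  case True then show ?thesis by simp
next
  case False
  then show ?thesis by real_asymp
qed

lemma (in prob_space) cs_tail:
  fixes F :: "'a \<Rightarrow> real"
  assumes intF: "integrable M F" and intF2: "integrable M (\<lambda>x. (F x)^2)"
    and F0: "\<And>x. 0 \<le> F x" and B: "B \<in> events" and pB: "prob B \<le> 1/8"
    and Fa: "\<And>x. x \<notin> B \<Longrightarrow> F x \<le> a"
  shows "(expectation F)^2 \<le> 2 * a^2 + expectation (\<lambda>x. (F x)^2) / 4"
proof -
  define m2 where "m2 = expectation (\<lambda>x. (F x)^2)"
  define J where "J = expectation (\<lambda>x. indicator B x * F x)"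
  define t where "t = 8 * J"
  have a0: "a \<ge> 0"
  proof (rule ccontr)
    assume "\<not> a \<ge> 0"
    then have "\<forall>x. x \<in> B" using Fa F0 by (meson order_trans not_le)
    then have "B = UNIV" by auto
    then have "B = space M" using B sets.sets_into_space by (metis subset_UNIV subset_antisym)
    then show False using pB prob_space by simp
  qed
  have i1: "integrable M (\<lambda>x. indicator B x * F x)"
    using integrable_real_mult_indicator[OF B intF] by (simp add: mult.commute)
  have i2: "integrable M (\<lambda>x. indicator B x * (F x)^2)"
    using integrable_real_mult_indicator[OF B intF2] by (simp add: mult.commute)
  have i3: "integrable M (\<lambda>x. indicator B x :: real)"
    using B by (intro integrable_real_indicator) (auto simp: less_top[symmetric])
  have iC: "integrable M (\<lambda>x. indicator (space M - B) x * F x)"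
    using integrable_real_mult_indicator[OF _ intF, of "space M - B"] B by (simp add: mult.commute)
  have "0 \<le> expectation (\<lambda>x. indicator B x * (F x - t)^2)"
    by (intro integral_nonneg_AE) auto
  also have "(\<lambda>x. indicator B x * (F x - t)^2) = (\<lambda>x. indicator B x * (F x)^2 - 2 * t * (indicator B x * F x) + t^2 * indicator B x)"
    by (rule ext) (simp split: split_indicator add: power2_eq_square algebra_simps)
  also have "expectation \<dots> = expectation (\<lambda>x. indicator B x * (F x)^2) - 2 * t * J + t^2 * prob B"
  proof -
    have ia: "integrable M (\<lambda>x. indicator B x * (F x)^2 - 2 * t * (indicator B x * F x))"
      by (intro Bochner_Integration.integrable_diff integrable_mult_right i1 i2)
    have "expectation (\<lambda>x. indicator B x * (F x)^2 - 2 * t * (indicator B x * F x) + t^2 * indicator B x)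
       = expectation (\<lambda>x. indicator B x * (F x)^2 - 2 * t * (indicator B x * F x)) + expectation (\<lambda>x. t^2 * indicator B x)"
      by (intro Bochner_Integration.integral_add integrable_mult_right ia i3)
    also have "expectation (\<lambda>x. indicator B x * (F x)^2 - 2 * t * (indicator B x * F x))
       = expectation (\<lambda>x. indicator B x * (F x)^2) - expectation (\<lambda>x. 2 * t * (indicator B x * F x))"
      by (intro Bochner_Integration.integral_diff integrable_mult_right i1 i2)
    also have "expectation (\<lambda>x. 2 * t * (indicator B x * F x)) = 2 * t * J"
      unfolding J_def by (rule integral_mult_right_zero)
    also have "expectation (\<lambda>x. t^2 * indicator B x) = t^2 * prob B"
      using B by (simp add: measure_def)
    finally show ?thesis .
  qed
  finally have 1: "0 \<le> expectation (\<lambda>x. indicator B x * (F x)^2) - 2 * t * J + t^2 * prob B" .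
  have "expectation (\<lambda>x. indicator B x * (F x)^2) \<le> m2"
    unfolding m2_def using i2 intF2 by (intro integral_mono) (auto simp: indicator_def)
  moreover have "t^2 * prob B \<le> t^2 / 8" proof -
    have "t^2 * prob B \<le> t^2 * (1/8)" using pB by (intro mult_left_mono) auto
    then show ?thesis by simp
  qed
  ultimately have "2 * t * J \<le> m2 + t^2 / 8" using 1 by linarith
  moreover have "2 * t * J = 16 * J^2" "t^2 / 8 = 8 * J^2" by (simp_all add: t_def power2_eq_square)
  ultimately have J2: "J^2 \<le> m2 / 8" by linarith
  have J0: "J \<ge> 0" unfolding J_def using F0 by (intro integral_nonneg_AE) auto
  have "expectation (\<lambda>x. indicator (space M - B) x * F x) \<le> expectation (\<lambda>x. a)"
    using iC a0 Fa by (intro integral_mono) (auto simp: indicator_def)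
  then have c1: "expectation (\<lambda>x. indicator (space M - B) x * F x) \<le> a" using prob_space by simp
  have "expectation F = expectation (\<lambda>x. indicator (space M - B) x * F x + indicator B x * F x)"
    using sets.sets_into_space[OF B] by (intro Bochner_Integration.integral_cong) (auto simp: indicator_def)
  also have "\<dots> = expectation (\<lambda>x. indicator (space M - B) x * F x) + J"
    using iC i1 by (simp add: J_def)
  finally have m1: "expectation F \<le> a + J" using c1 by linarith
  have m10: "expectation F \<ge> 0" using F0 by (intro integral_nonneg_AE) auto
  have "(expectation F)^2 \<le> (a + J)^2" using m1 m10 by (intro power_mono) auto
  also have "\<dots> \<le> 2 * a^2 + 2 * J^2"
  proof -
    have "(a+J)^2 + (a-J)^2 = 2*a^2 + 2*J^2" by (simp add: power2_eq_square algebra_simps)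
    moreover have "0 \<le> (a - J)^2" by simp
    ultimately show ?thesis by linarith
  qed
  finally show ?thesis using J2 unfolding m2_def by linarith
qed



lemma bound_F:
  fixes V :: "'a::euclidean_space \<Rightarrow> real" and \<phi> :: "'a \<Rightarrow> real"
  assumes V_meas: "V \<in> borel_measurable lebesgue"
    and V_int: "(\<integral>\<^sup>+ x. ennreal (exp (- V x)) \<partial>lebesgue) < \<infinity>"
    and C2: "C2 > 0"
    and poinc: "\<And>f. Cb_inf f \<Longrightarrow>
       ennreal (\<integral>x. (f x - (\<integral>y. f y \<partial>muV V))^2 \<partial>muV V) \<le> ennreal C2 * Dform \<alpha> V \<delta> f"
    and lam: "0 \<le> lam" "lam \<le> \<delta>/2"
    and K0: "(\<integral>\<^sup>+ z. ennreal (norm (z::'a) powr (2 - real DIM('a) - \<alpha>) * exp (- (\<delta>/2) * norm z)) \<partial>lborel) = ennreal K0r"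
    and K0r: "K0r \<ge> 0"
    and small: "C2 * (lam/2)^2 * K0r \<le> 1/2"
    and Cb: "Cb_inf (\<lambda>x. exp (\<phi> x))"
    and lip: "\<And>x y. \<bar>\<phi> y - \<phi> x\<bar> \<le> lam / 2 * norm (y - x)"
    and \<phi>_meas[measurable]: "\<phi> \<in> borel_measurable borel"
    and \<phi>_bdd: "\<And>x. \<bar>\<phi> x\<bar> \<le> B\<phi>"
    and B: "B \<in> sets (muV V)" "measure (muV V) B \<le> 1/8"
    and \<phi>_c: "\<And>x. x \<notin> B \<Longrightarrow> \<phi> x \<le> c"
  shows "(\<integral>\<^sup>+ x. ennreal ((exp (\<phi> x))^2) \<partial>muV V) \<le> ennreal (8 * (exp c)^2)"
proof -
  interpret prob_space "muV V" by (rule muV_setup[OF V_meas V_int])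
  define F where "F x = exp (\<phi> x)" for x
  have F0: "F x \<ge> 0" for x by (simp add: F_def)
  have Fmeas: "F \<in> borel_measurable (muV V)" unfolding F_def by (rule meas_muV) measurable
  have F2meas: "(\<lambda>x. (F x)^2) \<in> borel_measurable (muV V)" unfolding F_def by (rule meas_muV) measurable
  have Fb: "norm (F x) \<le> exp B\<phi>" for x using \<phi>_bdd[of x] by (simp add: F_def abs_le_iff)
  have intF: "integrable (muV V) F"
    by (rule integrable_const_bound[where B="exp B\<phi>"]) (use Fb Fmeas in auto)
  have F2b: "norm ((F x)^2) \<le> (exp B\<phi>)^2" for x using Fb[of x] F0[of x]
    by (simp add: power_mono)
  have intF2: "integrable (muV V) (\<lambda>x. (F x)^2)"
    by (rule integrable_const_bound[where B="(exp B\<phi>)^2"]) (use F2b F2meas in auto)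
  define m1 where "m1 = expectation F"
  define m2 where "m2 = expectation (\<lambda>x. (F x)^2)"
  have nn2: "(\<integral>\<^sup>+ x. ennreal ((F x)^2) \<partial>muV V) = ennreal m2"
    unfolding m2_def by (rule nn_integral_eq_integral[OF intF2]) auto
  have m20: "m2 \<ge> 0" unfolding m2_def by (intro integral_nonneg_AE) auto
  have "Dform \<alpha> V \<delta> F \<le> ennreal ((lam/2)^2) * ennreal K0r * ennreal m2"
    using Dform_bound[OF lip lam \<phi>_meas, of \<alpha> V] K0 nn2 unfolding F_def by simp
  then have "ennreal C2 * Dform \<alpha> V \<delta> F \<le> ennreal C2 * (ennreal ((lam/2)^2) * ennreal K0r * ennreal m2)"
    by (rule mult_left_mono) simp
  also have "\<dots> = ennreal (C2 * (lam/2)^2 * K0r * m2)"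
    using C2 K0r m20 by (simp add: ennreal_mult mult_ac)
  finally have "ennreal (expectation (\<lambda>x. (F x - m1)^2)) \<le> ennreal (C2 * (lam/2)^2 * K0r * m2)"
    using poinc[of F] Cb unfolding F_def m1_def by (auto simp: F_def[abs_def])
  then have "expectation (\<lambda>x. (F x - m1)^2) \<le> C2 * (lam/2)^2 * K0r * m2"
    using C2 K0r m20 by (subst (asm) ennreal_le_iff) auto
  also have "\<dots> \<le> (1/2) * m2" using small m20 by (intro mult_right_mono) auto
  finally have v: "expectation (\<lambda>x. (F x - m1)^2) \<le> m2 / 2" by simp
  have "expectation (\<lambda>x. (F x - m1)^2) = m2 - m1^2"
    unfolding m1_def m2_def by (rule variance_eq[OF intF intF2])
  with v have 1: "m2 \<le> 2 * m1^2" by simp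
  have Fc: "F x \<le> exp c" if "x \<notin> B" for x using \<phi>_c[OF that] by (simp add: F_def)
  have 2: "m1^2 \<le> 2 * (exp c)^2 + m2 / 4"
    unfolding m1_def m2_def using B by (intro cs_tail intF intF2 F0 Fc) auto
  from 1 2 have "m2 \<le> 8 * (exp c)^2" by linarith
  then show ?thesis using nn2 by (simp add: F_def)
qed



lemma one_dir:
  fixes V :: "'a::euclidean_space \<Rightarrow> real"
  assumes V_meas: "V \<in> borel_measurable lebesgue"
    and V_int: "(\<integral>\<^sup>+ x. ennreal (exp (- V x)) \<partial>lebesgue) < \<infinity>"
    and C2: "C2 > 0"
    and poinc: "\<And>f. Cb_inf f \<Longrightarrow>
       ennreal (\<integral>x. (f x - (\<integral>y. f y \<partial>muV V))^2 \<partial>muV V) \<le> ennreal C2 * Dform \<alpha> V \<delta> f"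
    and lam: "0 \<le> lam" "lam \<le> \<delta>/2"
    and K0: "(\<integral>\<^sup>+ z. ennreal (norm (z::'a) powr (2 - real DIM('a) - \<alpha>) * exp (- (\<delta>/2) * norm z)) \<partial>lborel) = ennreal K0r"
    and K0r: "K0r \<ge> 0"
    and small: "C2 * (lam/2)^2 * K0r \<le> 1/2"
    and b: "b \<in> Basis" and s: "\<bar>s\<bar> = 1"
  shows "(\<integral>\<^sup>+ x. ennreal (exp (s * lam * (x \<bullet> b))) \<partial>muV V) < \<infinity>"
proof -
  interpret prob_space "muV V" by (rule muV_setup[OF V_meas V_int])
  have sp: "space (muV V) = UNIV" by (rule muV_setup[OF V_meas V_int])
  have absb: "(\<lambda>x::'a. \<bar>x \<bullet> b\<bar>) \<in> borel_measurable (muV V)" by (rule meas_muV) measurable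
  define A where "A n = {x::'a. real n < \<bar>x \<bullet> b\<bar>}" for n :: nat
  have Aev: "A n \<in> sets (muV V)" for n
  proof -
    have "A n = (\<lambda>x. \<bar>x \<bullet> b\<bar>) -` {real n<..} \<inter> space (muV V)" by (auto simp: A_def sp)
    then show ?thesis using measurable_sets[OF absb, of "{real n<..}"] by simp
  qed
  have dec: "decseq A" unfolding decseq_def A_def by auto
  have emp: "(\<Inter>n. A n) = {}"
  proof (rule ccontr)
    assume "(\<Inter>n. A n) \<noteq> {}"
    then obtain x where x: "\<And>n. x \<in> A n" by blast
    obtain n :: nat where n: "\<bar>x \<bullet> b\<bar> < real n" using reals_Archimedean2 by blast
    from x[of n] n show False by (simp add: A_def)
  qed
  have "(\<lambda>n. measure (muV V) (A n)) \<longlonglongrightarrow> measure (muV V) (\<Inter>n. A n)"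
    using Aev dec by (intro finite_Lim_measure_decseq) auto
  then have "(\<lambda>n. measure (muV V) (A n)) \<longlonglongrightarrow> 0" by (simp add: emp)
  then have "eventually (\<lambda>n. measure (muV V) (A n) < 1/8) sequentially"
    by (rule order_tendstoD) simp
  then obtain N where N: "measure (muV V) (A N) < 1/8" by (auto simp: eventually_sequentially)
  define R where "R = real N"
  define Cst where "Cst = 8 * (exp (lam / 2 * R))^2"
  define \<phi> where "\<phi> k x = (s * lam / 2 * (real k + 1)) * sin ((1 / (real k + 1)) * (x \<bullet> b) + 0)" for k :: nat and x :: 'a
  have \<phi>_eq: "\<phi> k x = s * (lam / 2) * ((real k + 1) * sin ((x \<bullet> b) / (real k + 1)))" for k x
    by (simp add: \<phi>_def)
  have bnd: "(\<integral>\<^sup>+ x. ennreal ((exp (\<phi> k x))^2) \<partial>muV V) \<le> ennreal Cst" for k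
  proof -
    define nn where "nn = real k + 1"
    have nn: "nn > 0" by (simp add: nn_def)
    have Tk: "T (\<lambda>t. exp ((s * lam / 2 * nn) * sin ((1 / nn) * t + 0)))"
      by (intro T_exp T_sin)
    have Cb: "Cb_inf (\<lambda>x. exp (\<phi> k x))"
      using Cb_inf_T[OF Tk, of b] by (simp add: \<phi>_def nn_def)
    have lip: "\<bar>\<phi> k y - \<phi> k x\<bar> \<le> lam / 2 * norm (y - x)" for x y
    proof -
      have "\<bar>\<phi> k y - \<phi> k x\<bar> = lam / 2 * \<bar>nn * sin ((y \<bullet> b) / nn) - nn * sin ((x \<bullet> b) / nn)\<bar>"
      proof -
        have "\<phi> k y - \<phi> k x = (s * (lam/2)) * (nn * sin ((y \<bullet> b) / nn) - nn * sin ((x \<bullet> b) / nn))"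
          unfolding \<phi>_eq nn_def by (simp only: right_diff_distrib)
        moreover have "\<bar>s * (lam/2)\<bar> = lam / 2" using s lam by (simp add: abs_mult)
        ultimately show ?thesis by (simp only: abs_mult)
      qed
      also have "\<dots> \<le> lam / 2 * \<bar>y \<bullet> b - x \<bullet> b\<bar>"
        using sin_lip[OF nn] lam by (intro mult_left_mono) auto
      also have "\<bar>y \<bullet> b - x \<bullet> b\<bar> \<le> norm (y - x)"
        using Basis_le_norm[OF b, of "y - x"] by (simp add: inner_diff_left)
      finally show ?thesis using lam by (simp add: mult_left_mono)
    qed
    have absn: "\<bar>nn * sin (t / nn)\<bar> \<le> \<bar>t\<bar>" for t
      using abs_sin_x_le_abs_x[of "t / nn"] nn by (simp add: abs_mult field_simps)
    have bdd: "\<bar>\<phi> k x\<bar> \<le> lam / 2 * nn" for x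
    proof -
      have "\<bar>\<phi> k x\<bar> = lam / 2 * (nn * \<bar>sin ((x \<bullet> b) / nn)\<bar>)"
        using s lam nn by (simp add: \<phi>_eq nn_def abs_mult)
      also have "\<dots> \<le> lam / 2 * (nn * 1)" using lam nn by (intro mult_left_mono) auto
      finally show ?thesis by simp
    qed
    have phic: "\<phi> k x \<le> lam / 2 * R" if "x \<notin> A N" for x
    proof -
      have xR: "\<bar>x \<bullet> b\<bar> \<le> R" using that by (simp add: A_def R_def)
      have "\<phi> k x \<le> \<bar>\<phi> k x\<bar>" by simp
      also have "\<bar>\<phi> k x\<bar> = lam / 2 * \<bar>nn * sin ((x \<bullet> b) / nn)\<bar>"
        using s lam by (simp add: \<phi>_eq nn_def abs_mult)
      also have "\<dots> \<le> lam / 2 * R" using absn[of "x \<bullet> b"] xR lam by (intro mult_left_mono) auto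
      finally show ?thesis .
    qed
    have meas: "\<phi> k \<in> borel_measurable borel" unfolding \<phi>_def by measurable
    show ?thesis unfolding Cst_def
      by (rule bound_F[OF V_meas V_int C2 poinc lam K0 K0r small Cb lip meas bdd Aev]) (use N phic in auto)
  qed
  have umeas: "(\<lambda>x. ennreal ((exp (\<phi> k x))^2)) \<in> borel_measurable (muV V)" for k
    by (rule meas_muV) (unfold \<phi>_def, measurable)
  have lim: "(\<lambda>k. ennreal ((exp (\<phi> k x))^2)) \<longlonglongrightarrow> ennreal (exp (s * lam * (x \<bullet> b)))" for x
  proof -
    have e: "(exp (\<phi> k x))^2 = exp (s * lam * ((real k + 1) * sin ((x \<bullet> b) / (real k + 1))))" for k
      by (simp add: \<phi>_eq power2_eq_square exp_add[symmetric])
    have "(\<lambda>k. exp (s * lam * ((real k + 1) * sin ((x \<bullet> b) / (real k + 1))))) \<longlonglongrightarrow> exp (s * lam * (x \<bullet> b))"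
      by (intro tendsto_exp tendsto_mult_left nsin_lim)
    then show ?thesis unfolding e by (intro tendsto_ennrealI)
  qed
  have "(\<integral>\<^sup>+ x. ennreal (exp (s * lam * (x \<bullet> b))) \<partial>muV V) = (\<integral>\<^sup>+ x. liminf (\<lambda>k. ennreal ((exp (\<phi> k x))^2)) \<partial>muV V)"
    by (intro nn_integral_cong) (simp add: lim_imp_Liminf[OF _ lim])
  also have "\<dots> \<le> liminf (\<lambda>k. \<integral>\<^sup>+ x. ennreal ((exp (\<phi> k x))^2) \<partial>muV V)"
    by (rule nn_integral_liminf[OF umeas])
  also have "\<dots> \<le> limsup (\<lambda>k. \<integral>\<^sup>+ x. ennreal ((exp (\<phi> k x))^2) \<partial>muV V)"
    by (rule Liminf_le_Limsup) simp
  also have "\<dots> \<le> ennreal Cst"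
    by (rule Limsup_bounded) (use bnd in auto)
  also have "\<dots> < \<infinity>" by simp
  finally show ?thesis .
qed



lemma exp_norm_bound:
  fixes x :: "'a::euclidean_space" assumes lam: "lam \<ge> 0"
  shows "exp (lam / real DIM('a) * norm x) \<le> (\<Sum>b\<in>Basis. exp (1 * lam * (x \<bullet> b)) + exp ((-1) * lam * (x \<bullet> b)))"
proof -
  define m where "m = Max ((\<lambda>b. \<bar>x \<bullet> b\<bar>) ` (Basis::'a set))"
  have "m \<in> (\<lambda>b. \<bar>x \<bullet> b\<bar>) ` Basis" unfolding m_def by (intro Max_in) auto
  then obtain b0 where b0: "b0 \<in> Basis" "m = \<bar>x \<bullet> b0\<bar>" by blast
  have le: "\<bar>x \<bullet> b\<bar> \<le> m" if "b \<in> Basis" for b unfolding m_def using that by (intro Max_ge) auto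
  have "norm x \<le> (\<Sum>b\<in>Basis. \<bar>x \<bullet> b\<bar>)" by (rule norm_le_l1)
  also have "\<dots> \<le> (\<Sum>b\<in>(Basis::'a set). m)" using le by (intro sum_mono) auto
  also have "\<dots> = real DIM('a) * m" by simp
  finally have "norm x \<le> real DIM('a) * m" .
  then have "lam / real DIM('a) * norm x \<le> lam / real DIM('a) * (real DIM('a) * m)"
    using lam by (intro mult_left_mono) auto
  also have "\<dots> = lam * m" by simp
  finally have 1: "exp (lam / real DIM('a) * norm x) \<le> exp (lam * \<bar>x \<bullet> b0\<bar>)" using b0 by simp
  have 2: "exp (lam * \<bar>x \<bullet> b0\<bar>) \<le> exp (1 * lam * (x \<bullet> b0)) + exp ((-1) * lam * (x \<bullet> b0))"
    by (cases "x \<bullet> b0 \<ge> 0") (auto simp: abs_if add_increasing add_increasing2)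
  have 3: "exp (1 * lam * (x \<bullet> b0)) + exp ((-1) * lam * (x \<bullet> b0)) \<le> (\<Sum>b\<in>Basis. exp (1 * lam * (x \<bullet> b)) + exp ((-1) * lam * (x \<bullet> b)))"
    using b0(1) by (intro member_le_sum) (auto intro: add_nonneg_nonneg)
  from 1 2 3 show ?thesis by linarith
qed

theorem proposition1p3:
  fixes V :: "'a::euclidean_space \<Rightarrow> real" and \<alpha> \<delta> C2 :: real
  assumes V_meas: "V \<in> borel_measurable lebesgue"
    and V_lb: "locally_bounded V"
    and V_bdd: "\<exists>M. \<forall>x. exp (- V x) \<le> M"
    and V_int: "(\<integral>\<^sup>+ x. ennreal (exp (- V x)) \<partial>lebesgue) < \<infinity>"
    and delta: "\<delta> > 0" and alpha: "0 < \<alpha>" "\<alpha> < 2"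
    and C2: "C2 > 0"
    and poinc: "\<And>f. Cb_inf f \<Longrightarrow>
       ennreal (\<integral>x. (f x - (\<integral>y. f y \<partial>muV V))^2 \<partial>muV V) \<le> ennreal C2 * Dform \<alpha> V \<delta> f"
  shows "\<exists>lam0>0. (\<integral>\<^sup>+ x. ennreal (exp (lam0 * norm x)) \<partial>muV V) < \<infinity>"
proof -
  define K0 where "K0 = (\<integral>\<^sup>+ z. ennreal (norm (z::'a) powr (2 - real DIM('a) - \<alpha>) * exp (- (\<delta>/2) * norm z)) \<partial>lborel)"
  have K0fin: "K0 < \<infinity>" unfolding K0_def using K0_finite[of "\<delta>/2" \<alpha>] delta alpha by simp
  define K0r where "K0r = enn2real K0"
  have K0r0: "K0r \<ge> 0" by (simp add: K0r_def)
  have K0eq: "K0 = ennreal K0r" using K0fin by (simp add: K0r_def ennreal_enn2real less_top)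
  define q where "q = C2 * K0r"
  have q0: "q \<ge> 0" using C2 K0r0 by (simp add: q_def)
  define lam where "lam = min (min (\<delta>/2) 1) (1 / (q + 1))"
  have lam0: "lam > 0" using delta q0 by (simp add: lam_def)
  have lamd: "lam \<le> \<delta>/2" "lam \<le> 1" by (simp_all add: lam_def)
  have lamge: "0 \<le> lam" using lam0 by simp
  have "q * lam \<le> q * (1 / (q + 1))" using q0 by (intro mult_left_mono) (simp_all add: lam_def)
  also have "\<dots> \<le> 1" using q0 by (simp add: field_simps)
  finally have ql: "q * lam \<le> 1" .
  have "q * lam^2 \<le> q * lam * 1"
    using q0 lam0 lamd by (simp add: power2_eq_square mult_left_mono)
  then have "q * lam^2 \<le> 1" using ql by simp
  then have small: "C2 * (lam/2)^2 * K0r \<le> 1/2"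
    by (simp add: q_def power_divide mult_ac)
  have dir: "(\<integral>\<^sup>+ x. ennreal (exp (s * lam * (x \<bullet> b))) \<partial>muV V) < \<infinity>" if "b \<in> Basis" "\<bar>s\<bar> = 1" for b s
    by (rule one_dir[OF V_meas V_int C2 poinc lamge lamd(1) K0eq[unfolded K0_def] K0r0 small that])
  define lam0 where "lam0 = lam / real DIM('a)"
  have "lam0 > 0" using lam0 by (simp add: lam0_def)
  moreover have "(\<integral>\<^sup>+ x. ennreal (exp (lam0 * norm x)) \<partial>muV V) < \<infinity>"
  proof -
    have meas: "(\<lambda>x::'a. ennreal (exp (s * lam * (x \<bullet> b)))) \<in> borel_measurable (muV V)" for s b
      by (rule meas_muV) measurable
    have "(\<integral>\<^sup>+ x. ennreal (exp (lam0 * norm x)) \<partial>muV V)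
        \<le> (\<integral>\<^sup>+ x. (\<Sum>b\<in>Basis. ennreal (exp (1 * lam * (x \<bullet> b))) + ennreal (exp ((-1) * lam * (x \<bullet> b)))) \<partial>muV V)"
    proof (intro nn_integral_mono)
      fix x :: 'a
      have "ennreal (exp (lam0 * norm x)) \<le> ennreal (\<Sum>b\<in>Basis. exp (1 * lam * (x \<bullet> b)) + exp ((-1) * lam * (x \<bullet> b)))"
        using exp_norm_bound[of lam x] lam0 unfolding lam0_def by (intro ennreal_leI) simp
      also have "\<dots> = (\<Sum>b\<in>Basis. ennreal (exp (1 * lam * (x \<bullet> b))) + ennreal (exp ((-1) * lam * (x \<bullet> b))))"
        by (simp add: ennreal_plus[symmetric] del: ennreal_plus)
      finally show "ennreal (exp (lam0 * norm x)) \<le> (\<Sum>b\<in>Basis. ennreal (exp (1 * lam * (x \<bullet> b))) + ennreal (exp ((-1) * lam * (x \<bullet> b))))" .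
    qed
    also have "\<dots> = (\<Sum>b\<in>Basis. (\<integral>\<^sup>+ x. ennreal (exp (1 * lam * (x \<bullet> b))) \<partial>muV V) + (\<integral>\<^sup>+ x. ennreal (exp ((-1) * lam * (x \<bullet> b))) \<partial>muV V))"
    proof -
      have m1: "(\<lambda>x::'a. ennreal (exp (1 * lam * (x \<bullet> b)))) \<in> borel_measurable (muV V)" for b
        by (rule meas_muV) measurable
      have m2: "(\<lambda>x::'a. ennreal (exp ((-1) * lam * (x \<bullet> b)))) \<in> borel_measurable (muV V)" for b
        by (rule meas_muV) measurable
      have m3: "(\<lambda>x::'a. ennreal (exp (1 * lam * (x \<bullet> b))) + ennreal (exp ((-1) * lam * (x \<bullet> b)))) \<in> borel_measurable (muV V)" for b
        by (rule meas_muV) measurable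
      have "(\<integral>\<^sup>+ x. (\<Sum>b\<in>Basis. ennreal (exp (1 * lam * (x \<bullet> b))) + ennreal (exp ((-1) * lam * (x \<bullet> b)))) \<partial>muV V)
         = (\<Sum>b\<in>Basis. \<integral>\<^sup>+ x. ennreal (exp (1 * lam * (x \<bullet> b))) + ennreal (exp ((-1) * lam * (x \<bullet> b))) \<partial>muV V)"
        by (rule nn_integral_sum) (rule m3)
      also have "\<dots> = (\<Sum>b\<in>Basis. (\<integral>\<^sup>+ x. ennreal (exp (1 * lam * (x \<bullet> b))) \<partial>muV V) + (\<integral>\<^sup>+ x. ennreal (exp ((-1) * lam * (x \<bullet> b))) \<partial>muV V))"
        by (intro sum.cong refl nn_integral_add m1 m2)
      finally show ?thesis .
    qed
    also have "\<dots> < \<infinity>"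
    proof -
      have "\<forall>b\<in>Basis. (\<integral>\<^sup>+ x. ennreal (exp (1 * lam * (x \<bullet> b))) \<partial>muV V) + (\<integral>\<^sup>+ x. ennreal (exp ((-1) * lam * (x \<bullet> b))) \<partial>muV V) < \<infinity>"
      proof
        fix b :: 'a assume b: "b \<in> Basis"
        have "(\<integral>\<^sup>+ x. ennreal (exp (1 * lam * (x \<bullet> b))) \<partial>muV V) < \<infinity>" by (rule dir[OF b]) simp
        moreover have "(\<integral>\<^sup>+ x. ennreal (exp ((-1) * lam * (x \<bullet> b))) \<partial>muV V) < \<infinity>" by (rule dir[OF b]) simp
        ultimately show "(\<integral>\<^sup>+ x. ennreal (exp (1 * lam * (x \<bullet> b))) \<partial>muV V) + (\<integral>\<^sup>+ x. ennreal (exp ((-1) * lam * (x \<bullet> b))) \<partial>muV V) < \<infinity>"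
          by (simp add: less_top)
      qed
      then show ?thesis using ennreal_sum_less_top[of "Basis::'a set"] by simp
    qed
    finally show ?thesis .
  qed
  ultimately show ?thesis by blast
qed


end
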